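(* Let $N\ge 5$ and let $\mu_1,\dots,\mu_N$ be distinct real numbers. For $z\in\mathbb{C}\setminus\mathbb{R}$ define the vectors in $\mathbb{R}^N$ $$Y_1(z) := \left(\Re \frac{1}{\mu_j - z}\right)_{j=1}^N,\quad Y_2(z) := \left(\Re \frac{1}{(\mu_j - z)^2}\right)_{j=1}^N,\quad Y_3(z) := \left(\Im \frac{1}{(\mu_j - z)^2}\right)_{j=1}^N.$$ Then for every $z\in\mathbb{C}\setminus\mathbb{R}$, $Y_1(z)$ does not belong to the $\mathbb{R}$-linear span of $Y_2(z)$ and $Y_3(z)$. *)

theory Defs
  imports "HOL-Analysis.Analysis"
begin

text \<open>Vectors in R^N are represented as functions on the index set {1..N}.\<close>

definition Y1 :: "(nat \<Rightarrow> real) \<Rightarrow> complex \<Rightarrow> nat \<Rightarrow> real" where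
  "Y1 \<mu> z j = Re (1 / (complex_of_real (\<mu> j) - z))"

definition Y2 :: "(nat \<Rightarrow> real) \<Rightarrow> complex \<Rightarrow> nat \<Rightarrow> real" where
  "Y2 \<mu> z j = Re (1 / (complex_of_real (\<mu> j) - z) ^ 2)"

definition Y3 :: "(nat \<Rightarrow> real) \<Rightarrow> complex \<Rightarrow> nat \<Rightarrow> real" where
  "Y3 \<mu> z j = Im (1 / (complex_of_real (\<mu> j) - z) ^ 2)"

definition in_span2 :: "nat \<Rightarrow> (nat \<Rightarrow> real) \<Rightarrow> (nat \<Rightarrow> real) \<Rightarrow> (nat \<Rightarrow> real) \<Rightarrow> bool" where
  "in_span2 N u v w \<longleftrightarrow> (\<exists>a b :: real. \<forall>j\<in>{1..N}. u j = a * v j + b * w j)"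

end

theory Submission
  imports Defs
begin

lemma cubic4:
  fixes p q r s4 A B C :: real
  assumes "p \<noteq> q" "p \<noteq> r" "p \<noteq> s4" "q \<noteq> r" "q \<noteq> s4" "r \<noteq> s4"
    and "p^3 + A* p^2 + B* p + C = 0" "q^3 + A* q^2 + B* q + C = 0"
    "r^3 + A* r^2 + B* r + C = 0" "s4^3 + A* s4^2 + B* s4 + C = 0"
  shows False
proof -
  have d: "\<And>u v. u \<noteq> v \<Longrightarrow> u^3 + A* u^2 + B* u + C = 0 \<Longrightarrow> v^3 + A* v^2 + B* v + C = 0
     \<Longrightarrow> u^2 + u* v + v^2 + A* (u+v) + B = 0"
  proof -
    fix u v :: real assume "u \<noteq> v" "u^3 + A* u^2 + B* u + C = 0" "v^3 + A* v^2 + B* v + C = 0"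
    have id: "(u - v) * (u^2 + u* v + v^2 + A* (u+v) + B) = (u^3 + A* u^2 + B* u + C) - (v^3 + A* v^2 + B* v + C)"
      by (simp add: algebra_simps power2_eq_square power3_eq_cube)
    hence "(u - v) * (u^2 + u* v + v^2 + A* (u+v) + B) = 0" using \<open>u^3 + A* u^2 + B* u + C = 0\<close> \<open>v^3 + A* v^2 + B* v + C = 0\<close> by simp
    thus "u^2 + u* v + v^2 + A* (u+v) + B = 0" using \<open>u \<noteq> v\<close> by simp
  qed
  have e: "\<And>u v w. v \<noteq> w \<Longrightarrow> u^2 + u* v + v^2 + A* (u+v) + B = 0 \<Longrightarrow> u^2 + u* w + w^2 + A* (u+w) + B = 0
     \<Longrightarrow> u + v + w + A = 0"
  proof -
    fix u v w :: real assume "v \<noteq> w" "u^2 + u* v + v^2 + A* (u+v) + B = 0" "u^2 + u* w + w^2 + A* (u+w) + B = 0"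
    have id: "(v - w) * (u + v + w + A) = (u^2 + u* v + v^2 + A* (u+v) + B) - (u^2 + u* w + w^2 + A* (u+w) + B)"
      by (simp add: algebra_simps power2_eq_square)
    hence "(v - w) * (u + v + w + A) = 0" using \<open>u^2 + u* v + v^2 + A* (u+v) + B = 0\<close> \<open>u^2 + u* w + w^2 + A* (u+w) + B = 0\<close> by simp
    thus "u + v + w + A = 0" using \<open>v \<noteq> w\<close> by simp
  qed
  have "p + q + r + A = 0" using e[OF assms(4) d[OF assms(1) assms(7,8)] d[OF assms(2) assms(7,9)]] .
  moreover have "p + q + s4 + A = 0" using e[OF assms(5) d[OF assms(1) assms(7,8)] d[OF assms(3) assms(7,10)]] .
  ultimately show False using assms(6) by linarith
qed

lemma comps:
  fixes t y :: real
  assumes "y \<noteq> 0"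
  shows "Re (1 / Complex t (-y)) = t / (t^2 + y^2)"
    "Re (1 / (Complex t (-y))^2) = (t^2 - y^2) / (t^2 + y^2)^2"
    "Im (1 / (Complex t (-y))^2) = 2*t*y / (t^2 + y^2)^2"
proof -
  have "(Complex t (-y))^2 = Complex (t^2 - y^2) (-2*t*y)"
    by (simp add: power2_eq_square complex_eq_iff)
  moreover have "(t^2 - y^2)^2 + (2*t*y)^2 = (t^2+y^2)^2"
    by (simp add: power2_eq_square algebra_simps)
  ultimately show "Re (1 / Complex t (-y)) = t / (t^2 + y^2)"
    "Re (1 / (Complex t (-y))^2) = (t^2 - y^2) / (t^2 + y^2)^2"
    "Im (1 / (Complex t (-y))^2) = 2*t*y / (t^2 + y^2)^2"
    by (simp_all add: Re_divide Im_divide power2_eq_square)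
qed

lemma pointeq:
  fixes t y a b :: real
  assumes "y \<noteq> 0"
    and "t / (t^2 + y^2) = a * ((t^2 - y^2) / (t^2 + y^2)^2) + b * (2*t*y / (t^2 + y^2)^2)"
  shows "t^3 + (-a)*t^2 + (y^2 - 2*b*y)*t + a*y^2 = 0"
proof -
  have pos: "t^2 + y^2 > 0" using assms(1) by (simp add: add_nonneg_pos)
  have "t * (t^2 + y^2) = a * (t^2 - y^2) + b * (2*t*y)"
  proof -
    have "t * (t^2 + y^2) = (t / (t^2 + y^2)) * (t^2+y^2)^2" using pos by (simp add: power2_eq_square[of "t^2+y^2"])
    also have "\<dots> = (a * ((t^2 - y^2) / (t^2 + y^2)^2) + b * (2*t*y / (t^2 + y^2)^2)) * (t^2+y^2)^2"
      using assms(2) by simp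
    also have "\<dots> = a * ((t^2 - y^2) / (t^2 + y^2)^2 * (t^2 + y^2)^2) + b * (2*t*y / (t^2 + y^2)^2 * (t^2 + y^2)^2)"
      by (simp add: algebra_simps)
    also have "\<dots> = a * (t^2 - y^2) + b * (2*t*y)" using pos by simp
    finally show ?thesis .
  qed
  moreover have "t^3 + (-a)*t^2 + (y^2 - 2*b*y)*t + a*y^2 = t * (t^2 + y^2) - (a * (t^2 - y^2) + b * (2*t*y))"
    by (simp add: algebra_simps power2_eq_square power3_eq_cube)
  ultimately show ?thesis by simp
qed

theorem lemma1p4:
  fixes N :: nat and \<mu> :: "nat \<Rightarrow> real" and z :: complex
  assumes "N \<ge> 5"
    and "inj_on \<mu> {1..N}"
    and "Im z \<noteq> 0"
  shows "\<not> in_span2 N (Y1 \<mu> z) (Y2 \<mu> z) (Y3 \<mu> z)"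
proof
  assume "in_span2 N (Y1 \<mu> z) (Y2 \<mu> z) (Y3 \<mu> z)"
  then obtain a b where ab: "\<forall>j\<in>{1..N}. Y1 \<mu> z j = a * Y2 \<mu> z j + b * Y3 \<mu> z j"
    unfolding in_span2_def by blast
  define y where "y = Im z"
  have y0: "y \<noteq> 0" using assms(3) y_def by simp
  have root: "(\<mu> j - Re z)^3 + (-a)*(\<mu> j - Re z)^2 + (y^2 - 2*b*y)*(\<mu> j - Re z) + a*y^2 = 0"
    if "j \<in> {1..N}" for j
  proof -
    have zz: "complex_of_real (\<mu> j) - z = Complex (\<mu> j - Re z) (-y)"
      unfolding y_def by (simp add: complex_eq_iff)
    show ?thesis
      apply (rule pointeq[OF y0])
      using ab[rule_format, OF that] unfolding Y1_def Y2_def Y3_def zz comps[OF y0] .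
  qed
  have inj: "\<And>i j. i \<in> {1..N} \<Longrightarrow> j \<in> {1..N} \<Longrightarrow> i \<noteq> j \<Longrightarrow> \<mu> i - Re z \<noteq> \<mu> j - Re z"
  proof -
    fix i j :: nat assume ij: "i \<in> {1..N}" "j \<in> {1..N}" "i \<noteq> j"
    show "\<mu> i - Re z \<noteq> \<mu> j - Re z"
    proof
      assume "\<mu> i - Re z = \<mu> j - Re z"
      hence "\<mu> i = \<mu> j" by simp
      thus False using inj_onD[OF assms(2) _ ij(1,2)] ij(3) by blast
    qed
  qed
  have m: "(1::nat) \<in> {1..N}" "(2::nat) \<in> {1..N}" "(3::nat) \<in> {1..N}" "(4::nat) \<in> {1..N}"
    using assms(1) by (simp_all add: atLeastAtMost_iff)
  show False
    apply (rule cubic4[OF inj[OF m(1) m(2)] inj[OF m(1) m(3)] inj[OF m(1) m(4)]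
          inj[OF m(2) m(3)] inj[OF m(2) m(4)] inj[OF m(3) m(4)]
          root[OF m(1)] root[OF m(2)] root[OF m(3)] root[OF m(4)]])
    by simp_all
qed

end
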